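(* Let $G$ and $H$ be connected graphs, not both complete, with $|V(G)|=s$, $|V(H)|=t$, $s\le t$ (and $t\ge 3$). Let $c_1=\max\{rx_3(G),rx_3(H)\}$ when both are defined. Then: (1) if $s=1$, then $rx_3(G\vee H)\le rx_3(H)+1$; (2) if $s=2$, then $rx_3(G\vee H)\le\min\{rc(H)+3,\ rx_3(K_{2,t})\}$; (3) if $3\le s\le t$, then $rx_3(G\vee H)\le\min\{c_1+1,\ rx_3(K_{s,t})\}$. In particular, if $s=t\ge 3$, then $rx_3(G\vee H)=rx_3(K_{s,t})=3$.
   Context: The join $G\vee H$ is obtained from the disjoint union of $G$ and $H$ by adding all edges joining every vertex of $G$ to every vertex of $H$. $K_{s,t}$ is the complete bipartite graph with parts of sizes $s,t$. An edge coloring may give adjacent edges the same color; a path (tree) is rainbow if its edges have pairwise distinct colors. $rc(H)$ is the minimum number of colors in an edge coloring of $H$ such that every two vertices are joined by a rainbow path. For a connected graph on at least $3$ vertices, $rx_3$ is the minimum number of colors in an edge coloring such that every set of $3$ vertices lies in some rainbow tree. *)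

theory Defs
  imports Main
begin

definition graph :: "'a set \<Rightarrow> 'a set set \<Rightarrow> bool" where
  "graph V E \<longleftrightarrow> finite V \<and> (\<forall>e\<in>E. e \<subseteq> V \<and> card e = 2)"

definition is_path :: "'a set set \<Rightarrow> 'a list \<Rightarrow> bool" where
  "is_path E xs \<longleftrightarrow> xs \<noteq> [] \<and> distinct xs \<and>
     (\<forall>i. Suc i < length xs \<longrightarrow> {xs ! i, xs ! Suc i} \<in> E)"

definition path_edges :: "'a list \<Rightarrow> 'a set set" where
  "path_edges xs = {{xs ! i, xs ! Suc i} | i. Suc i < length xs}"

definition path_between :: "'a set set \<Rightarrow> 'a list \<Rightarrow> 'a \<Rightarrow> 'a \<Rightarrow> bool" where
  "path_between E xs u v \<longleftrightarrow> is_path E xs \<and> hd xs = u \<and> last xs = v"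

definition connected_graph :: "'a set \<Rightarrow> 'a set set \<Rightarrow> bool" where
  "connected_graph V E \<longleftrightarrow> graph V E \<and> V \<noteq> {} \<and>
     (\<forall>u\<in>V. \<forall>v\<in>V. \<exists>xs. path_between E xs u v)"

definition complete_graph :: "'a set \<Rightarrow> 'a set set \<Rightarrow> bool" where
  "complete_graph V E \<longleftrightarrow> (\<forall>u\<in>V. \<forall>v\<in>V. u \<noteq> v \<longrightarrow> {u, v} \<in> E)"

definition is_tree :: "'a set set \<Rightarrow> bool" where
  "is_tree T \<longleftrightarrow> finite T \<and> T \<noteq> {} \<and>
     (\<forall>u\<in>\<Union>T. \<forall>v\<in>\<Union>T. \<exists>xs. path_between T xs u v) \<and>
     card T + 1 = card (\<Union>T)"

definition rc :: "'a set \<Rightarrow> 'a set set \<Rightarrow> nat" where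
  "rc V E = (LEAST k. \<exists>c :: 'a set \<Rightarrow> nat. (\<forall>e\<in>E. c e < k) \<and>
     (\<forall>u\<in>V. \<forall>v\<in>V. u \<noteq> v \<longrightarrow>
        (\<exists>xs. path_between E xs u v \<and> inj_on c (path_edges xs))))"

definition rx3 :: "'a set \<Rightarrow> 'a set set \<Rightarrow> nat" where
  "rx3 V E = (LEAST k. \<exists>c :: 'a set \<Rightarrow> nat. (\<forall>e\<in>E. c e < k) \<and>
     (\<forall>S. S \<subseteq> V \<longrightarrow> card S = 3 \<longrightarrow>
        (\<exists>T. T \<subseteq> E \<and> is_tree T \<and> S \<subseteq> \<Union>T \<and> inj_on c T)))"

definition join_V :: "'a set \<Rightarrow> 'b set \<Rightarrow> ('a + 'b) set" where
  "join_V VG VH = Inl ` VG \<union> Inr ` VH"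

definition join_E :: "'a set \<Rightarrow> 'a set set \<Rightarrow> 'b set \<Rightarrow> 'b set set \<Rightarrow> ('a + 'b) set set" where
  "join_E VG EG VH EH = (image Inl) ` EG \<union> (image Inr) ` EH \<union>
     {{Inl u, Inr v} | u v. u \<in> VG \<and> v \<in> VH}"

definition Kbip_V :: "nat \<Rightarrow> nat \<Rightarrow> (nat + nat) set" where
  "Kbip_V s t = Inl ` {0..<s} \<union> Inr ` {0..<t}"

definition Kbip_E :: "nat \<Rightarrow> nat \<Rightarrow> (nat + nat) set set" where
  "Kbip_E s t = {{Inl i, Inr j} | i j. i < s \<and> j < t}"

end

theory Submission
  imports Defs
begin


definition good :: "('v set \<Rightarrow> nat) \<Rightarrow> 'v set \<Rightarrow> 'v set set \<Rightarrow> nat \<Rightarrow> bool" where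
  "good c V E k \<longleftrightarrow> (\<forall>e\<in>E. c e < k) \<and>
     (\<forall>S. S \<subseteq> V \<longrightarrow> card S = 3 \<longrightarrow>
        (\<exists>T. T \<subseteq> E \<and> is_tree T \<and> S \<subseteq> \<Union>T \<and> inj_on c T))"

lemma rx3_def': "rx3 V E = (LEAST k. \<exists>c. good c V E k)"
  unfolding rx3_def good_def by simp

lemma rx3_le: "good c V E k \<Longrightarrow> rx3 V E \<le> k"
  unfolding rx3_def' by (rule Least_le) blast

lemma rx3_good: "good c V E k \<Longrightarrow> \<exists>c. good c V E (rx3 V E)"
  unfolding rx3_def' by (rule LeastI_ex) blast

lemma is_path_mono: "is_path E xs \<Longrightarrow> E \<subseteq> E' \<Longrightarrow> is_path E' xs"
  unfolding is_path_def by blast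

lemma path_edges_subset: "is_path E xs \<Longrightarrow> path_edges xs \<subseteq> E"
  unfolding is_path_def path_edges_def by blast

lemma is_path_set: "is_path E xs \<Longrightarrow> set xs \<subseteq> insert (hd xs) (\<Union>E)"
proof
  fix v assume p: "is_path E xs" and "v \<in> set xs"
  then obtain i where i: "i < length xs" "v = xs ! i" by (auto simp: in_set_conv_nth)
  show "v \<in> insert (hd xs) (\<Union>E)"
  proof (cases i)
    case 0 then show ?thesis using i p by (auto simp: is_path_def hd_conv_nth)
  next
    case (Suc j)
    then have "{xs ! j, xs ! i} \<in> E" using p i unfolding is_path_def by auto
    then show ?thesis using i by auto
  qed
qed

lemma is_path_single[simp]: "is_path E [a]"
  unfolding is_path_def by simp

lemma is_path_cons:
  assumes "is_path E xs" "y \<notin> set xs" "{y, hd xs} \<in> E"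
  shows "is_path E (y # xs)"
  unfolding is_path_def
proof (intro conjI allI impI)
  show "distinct (y # xs)" using assms by (auto simp: is_path_def)
  fix i assume i: "Suc i < length (y # xs)"
  show "{(y # xs) ! i, (y # xs) ! Suc i} \<in> E"
  proof (cases i)
    case 0 then show ?thesis using assms i by (auto simp: is_path_def hd_conv_nth)
  next
    case (Suc j) then show ?thesis using assms i by (auto simp: is_path_def)
  qed
qed simp

lemma is_path_snoc:
  assumes "is_path E xs" "y \<notin> set xs" "{last xs, y} \<in> E"
  shows "is_path E (xs @ [y])"
  unfolding is_path_def
proof (intro conjI allI impI)
  show "distinct (xs @ [y])" using assms by (auto simp: is_path_def)
  fix i assume i: "Suc i < length (xs @ [y])"
  have ne: "xs \<noteq> []" using assms(1) by (simp add: is_path_def)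
  show "{(xs @ [y]) ! i, (xs @ [y]) ! Suc i} \<in> E"
  proof (cases "Suc i < length xs")
    case True then show ?thesis using assms i by (auto simp: is_path_def nth_append)
  next
    case False
    then have "i = length xs - 1" using i by simp
    then show ?thesis using assms ne by (auto simp: nth_append last_conv_nth)
  qed
qed simp

lemma single_edge_tree: "x \<noteq> y \<Longrightarrow> is_tree {{x, y}}"
  unfolding is_tree_def
proof (intro conjI ballI)
  fix u v assume "x \<noteq> y" "u \<in> \<Union>{{x, y}}" "v \<in> \<Union>{{x, y}}"
  then show "\<exists>xs. path_between {{x, y}} xs u v"
  proof (cases "u = v")
    case True then show ?thesis by (intro exI[of _ "[u]"]) (simp add: path_between_def)
  next
    case False
    then have "path_between {{x, y}} [u, v] u v" using \<open>u \<in> _\<close> \<open>v \<in> _\<close>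
      by (auto simp: path_between_def is_path_def less_Suc_eq insert_commute)
    then show ?thesis by blast
  qed
qed auto

lemma tree_finite_union: "is_tree T \<Longrightarrow> finite (\<Union>T)"
  unfolding is_tree_def by (metis card.infinite add_is_0 one_neq_zero)

lemma leaf_tree:
  assumes T: "is_tree T" and x: "x \<in> \<Union>T" and y: "y \<notin> \<Union>T"
  shows "is_tree (insert {x, y} T)"
proof -
  have fin: "finite (\<Union>T)" using tree_finite_union[OF T] .
  have notin: "{x, y} \<notin> T" using y by auto
  have U: "\<Union>(insert {x, y} T) = insert y (\<Union>T)" using x by auto
  have c1: "card (insert {x, y} T) = card T + 1" using T notin by (simp add: is_tree_def)
  have c2: "card (insert y (\<Union>T)) = card (\<Union>T) + 1" using fin y by simp
  have conn: "\<exists>xs. path_between (insert {x, y} T) xs u v"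
    if u: "u \<in> insert y (\<Union>T)" and v: "v \<in> insert y (\<Union>T)" for u v
  proof -
    have pathT: "\<exists>xs. path_between T xs a b" if "a \<in> \<Union>T" "b \<in> \<Union>T" for a b
      using T that unfolding is_tree_def by blast
    have mono: "T \<subseteq> insert {x, y} T" by blast
    consider "u = y" "v = y" | "u = y" "v \<in> \<Union>T" | "u \<in> \<Union>T" "v = y" | "u \<in> \<Union>T" "v \<in> \<Union>T"
      using u v by blast
    then show ?thesis
    proof cases
      case 1 then show ?thesis by (intro exI[of _ "[u]"]) (simp add: path_between_def)
    next
      case 2
      obtain xs where p: "path_between T xs x v" using pathT x 2 by blast
      have "set xs \<subseteq> insert (hd xs) (\<Union>T)" using p is_path_set by (auto simp: path_between_def)
      then have "y \<notin> set xs" using p x y by (auto simp: path_between_def)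
      then have "is_path (insert {x, y} T) (y # xs)"
        using p by (intro is_path_cons is_path_mono[OF _ mono]) (auto simp: path_between_def insert_commute)
      then show ?thesis using p 2 by (intro exI[of _ "y # xs"]) (auto simp: path_between_def is_path_def)
    next
      case 3
      obtain xs where p: "path_between T xs u x" using pathT x 3 by blast
      have "set xs \<subseteq> insert (hd xs) (\<Union>T)" using p is_path_set by (auto simp: path_between_def)
      then have "y \<notin> set xs" using p 3 y by (auto simp: path_between_def)
      then have "is_path (insert {x, y} T) (xs @ [y])"
        using p by (intro is_path_snoc is_path_mono[OF _ mono]) (auto simp: path_between_def)
      then show ?thesis using p 3 by (intro exI[of _ "xs @ [y]"]) (auto simp: path_between_def is_path_def hd_append)
    next
      case 4
      then obtain xs where "path_between T xs u v" using pathT by blast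
      then show ?thesis using is_path_mono[OF _ mono] by (auto simp: path_between_def)
    qed
  qed
  show ?thesis unfolding is_tree_def U
    using T c1 c2 conn by (auto simp: is_tree_def)
qed



lemma path_edges_snoc_sub: "path_edges xs \<subseteq> path_edges (xs @ [z])"
proof
  fix e assume "e \<in> path_edges xs"
  then obtain i where "e = {xs ! i, xs ! Suc i}" "Suc i < length xs" unfolding path_edges_def by blast
  then show "e \<in> path_edges (xs @ [z])" unfolding path_edges_def
    by (intro CollectI exI[of _ i]) (auto simp: nth_append)
qed

lemma path_edges_snoc_new: "xs \<noteq> [] \<Longrightarrow> {last xs, z} \<in> path_edges (xs @ [z])"
  unfolding path_edges_def
  by (rule CollectI, rule exI[of _ "length xs - 1"]) (auto simp: nth_append last_conv_nth)

lemma extend_tree: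
  assumes "is_tree T" "xs \<noteq> []" "hd xs \<in> \<Union>T"
  shows "\<exists>T'. is_tree T' \<and> T \<subseteq> T' \<and> T' \<subseteq> T \<union> path_edges xs \<and> set xs \<union> \<Union>T \<subseteq> \<Union>T'"
  using assms(2,3)
proof (induction xs rule: rev_induct)
  case Nil then show ?case by simp
next
  case (snoc z xs)
  show ?case
  proof (cases "xs = []")
    case True then show ?thesis using snoc assms(1) by auto
  next
    case False
    then have "hd xs \<in> \<Union>T" using snoc by simp
    then obtain T1 where T1: "is_tree T1" "T \<subseteq> T1" "T1 \<subseteq> T \<union> path_edges xs" "set xs \<union> \<Union>T \<subseteq> \<Union>T1"
      using snoc.IH False by blast
    have sub: "path_edges xs \<subseteq> path_edges (xs @ [z])" by (rule path_edges_snoc_sub)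
    show ?thesis
    proof (cases "z \<in> \<Union>T1")
      case True then show ?thesis using T1 sub by (intro exI[of _ T1]) auto
    next
      case nz: False
      have lx: "last xs \<in> \<Union>T1" using T1(4) False last_in_set by blast
      have "is_tree (insert {last xs, z} T1)" by (rule leaf_tree[OF T1(1) lx nz])
      then show ?thesis using T1 sub path_edges_snoc_new[OF False, of z] lx
        by (intro exI[of _ "insert {last xs, z} T1"]) auto
    qed
  qed
qed

lemma path_tree:
  assumes p: "path_between E xs u v" and uv: "u \<noteq> v"
  shows "\<exists>T. is_tree T \<and> T \<subseteq> path_edges xs \<and> u \<in> \<Union>T \<and> v \<in> \<Union>T"
proof -
  have ne: "xs \<noteq> []" and d: "distinct xs" and hd: "hd xs = u" and lst: "last xs = v"
    using p by (auto simp: path_between_def is_path_def)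
  have len: "Suc 0 < length xs"
  proof (rule ccontr)
    assume "\<not> ?thesis" then have "length xs = 1" using ne by (cases xs) auto
    then have "hd xs = last xs" by (cases xs) auto
    then show False using hd lst uv by simp
  qed
  have d01: "xs ! 0 \<noteq> xs ! 1" using d len by (metis One_nat_def Suc_lessD nth_eq_iff_index_eq zero_neq_one)
  have T0: "is_tree {{xs ! 0, xs ! 1}}" by (rule single_edge_tree[OF d01])
  have "{xs ! 0, xs ! Suc 0} \<in> path_edges xs" using len unfolding path_edges_def by blast
  then have T0sub: "{{xs ! 0, xs ! 1}} \<subseteq> path_edges xs" by simp
  have "hd xs = xs ! 0" using ne by (rule hd_conv_nth)
  then have hd0: "hd xs \<in> \<Union>{{xs ! 0, xs ! 1}}" by blast
  from extend_tree[OF T0 ne hd0] obtain T' where T': "is_tree T'" "{{xs ! 0, xs ! 1}} \<subseteq> T'"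
    "T' \<subseteq> {{xs ! 0, xs ! 1}} \<union> path_edges xs" "set xs \<union> \<Union>{{xs ! 0, xs ! 1}} \<subseteq> \<Union>T'"
    by (elim exE conjE)
  have "u \<in> set xs" "v \<in> set xs" using hd lst ne by auto
  then show ?thesis using T' T0sub by (intro exI[of _ T']) auto
qed

lemma image_tree:
  assumes T: "is_tree T" and inj: "inj_on f (\<Union>T)"
  shows "is_tree (image f ` T)"
proof -
  have injT: "inj_on (image f) T"
    by (rule inj_onI) (metis Sup_upper inj inj_on_image_eq_iff)
  have U: "\<Union>(image f ` T) = f ` \<Union>T" by auto
  have c1: "card (image f ` T) = card T" using card_image[OF injT] .
  have c2: "card (f ` \<Union>T) = card (\<Union>T)" using card_image[OF inj] .
  have conn: "\<exists>ys. path_between (image f ` T) ys u' v'"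
    if uv': "u' \<in> f ` \<Union>T" "v' \<in> f ` \<Union>T" for u' v'
  proof -
    obtain u v where uv: "u \<in> \<Union>T" "v \<in> \<Union>T" "u' = f u" "v' = f v" using uv' by blast
    then obtain xs where p: "path_between T xs u v" using T unfolding is_tree_def by blast
    have sx: "set xs \<subseteq> \<Union>T" using is_path_set[of T xs] p uv by (auto simp: path_between_def)
    have "is_path (image f ` T) (map f xs)"
      unfolding is_path_def
    proof (intro conjI allI impI)
      show "map f xs \<noteq> []" using p by (auto simp: path_between_def is_path_def)
      show "distinct (map f xs)" using p sx inj_on_subset[OF inj sx]
        by (auto simp: path_between_def is_path_def distinct_map)
      fix i assume "Suc i < length (map f xs)"
      then have "{xs ! i, xs ! Suc i} \<in> T" using p by (auto simp: path_between_def is_path_def)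
      then have "f ` {xs ! i, xs ! Suc i} \<in> image f ` T" by blast
      then show "{map f xs ! i, map f xs ! Suc i} \<in> image f ` T"
        using \<open>Suc i < _\<close> by simp
    qed
    then have "path_between (image f ` T) (map f xs) u' v'"
      using p uv by (auto simp: path_between_def is_path_def hd_map last_map)
    then show ?thesis by blast
  qed
  show ?thesis unfolding is_tree_def U c1 c2 using T conn by (auto simp: is_tree_def)
qed

lemma exists_good:
  assumes cg: "connected_graph V E"
  shows "\<exists>k c. good c V E k"
proof -
  have finV: "finite V" and sub: "\<forall>e\<in>E. e \<subseteq> V" using cg by (auto simp: connected_graph_def graph_def)
  have "E \<subseteq> Pow V" using sub by auto
  then have finE: "finite E" using finV by (meson finite_Pow_iff finite_subset)
  obtain f :: "'a set \<Rightarrow> nat" and n where f: "f ` E = {i. i < n}" "inj_on f E"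
    using finite_imp_inj_to_nat_seg[OF finE] by blast
  have "good f V E n"
    unfolding good_def
  proof (intro conjI allI impI)
    show "\<forall>e\<in>E. f e < n" using f by auto
    fix S assume S: "S \<subseteq> V" "card S = 3"
    then obtain a b d where abd: "S = {a, b, d}" "a \<noteq> b" "b \<noteq> d" "a \<noteq> d" by (auto simp: card_3_iff)
    have pth: "\<exists>xs. path_between E xs x y" if "x \<in> V" "y \<in> V" for x y
      using cg that by (auto simp: connected_graph_def)
    obtain xs where xs: "path_between E xs a b" using pth S abd by auto
    obtain T0 where T0: "is_tree T0" "T0 \<subseteq> path_edges xs" "a \<in> \<Union>T0" "b \<in> \<Union>T0"
      using path_tree[OF xs abd(2)] by blast
    obtain ys where ys: "path_between E ys a d" using pth S abd by auto
    have ysne: "ys \<noteq> []" and hys: "hd ys \<in> \<Union>T0" using ys T0 by (auto simp: path_between_def is_path_def)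
    from extend_tree[OF T0(1) ysne hys] obtain T1 where T1: "is_tree T1" "T0 \<subseteq> T1" "T1 \<subseteq> T0 \<union> path_edges ys" "set ys \<union> \<Union>T0 \<subseteq> \<Union>T1"
      by (elim exE conjE)
    have "path_edges xs \<subseteq> E" "path_edges ys \<subseteq> E"
      using xs ys path_edges_subset by (auto simp: path_between_def)
    then have T1E: "T1 \<subseteq> E" using T1 T0 by blast
    have "d \<in> set ys" using ys by (auto simp: path_between_def is_path_def)
    then have "S \<subseteq> \<Union>T1" using T1 T0 abd by auto
    moreover have "inj_on f T1" using inj_on_subset[OF f(2) T1E] .
    ultimately show "\<exists>T. T \<subseteq> E \<and> is_tree T \<and> S \<subseteq> \<Union>T \<and> inj_on f T" using T1 T1E by blast
  qed
  then show ?thesis by blast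
qed

definition rcgood :: "('v set \<Rightarrow> nat) \<Rightarrow> 'v set \<Rightarrow> 'v set set \<Rightarrow> nat \<Rightarrow> bool" where
  "rcgood c V E k \<longleftrightarrow> (\<forall>e\<in>E. c e < k) \<and>
     (\<forall>u\<in>V. \<forall>v\<in>V. u \<noteq> v \<longrightarrow> (\<exists>xs. path_between E xs u v \<and> inj_on c (path_edges xs)))"

lemma rc_good:
  assumes cg: "connected_graph V E"
  shows "\<exists>c. rcgood c V E (rc V E)"
proof -
  have finV: "finite V" and sub: "\<forall>e\<in>E. e \<subseteq> V" using cg by (auto simp: connected_graph_def graph_def)
  have "E \<subseteq> Pow V" using sub by auto
  then have finE: "finite E" using finV by (meson finite_Pow_iff finite_subset)
  obtain f :: "'a set \<Rightarrow> nat" and n where f: "f ` E = {i. i < n}" "inj_on f E"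
    using finite_imp_inj_to_nat_seg[OF finE] by blast
  have "rcgood f V E n"
    unfolding rcgood_def
  proof (intro conjI ballI impI)
    show "f e < n" if "e \<in> E" for e using f that by auto
    fix u v assume "u \<in> V" "v \<in> V" "u \<noteq> v"
    then obtain xs where xs: "path_between E xs u v" using cg by (auto simp: connected_graph_def)
    then have "path_edges xs \<subseteq> E" using path_edges_subset by (auto simp: path_between_def)
    then show "\<exists>xs. path_between E xs u v \<and> inj_on f (path_edges xs)"
      using xs inj_on_subset[OF f(2)] by blast
  qed
  then have "\<exists>k c. rcgood c V E k" by blast
  then have "\<exists>c. rcgood c V E (LEAST k. \<exists>c. rcgood c V E k)" by (rule LeastI_ex)
  moreover have "rc V E = (LEAST k. \<exists>c. rcgood c V E k)" unfolding rc_def rcgood_def by simp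
  ultimately show ?thesis by simp
qed



lemma two_subset3:
  assumes "e \<subseteq> {a, b, d}" "card e = 2"
  shows "e = {a, b} \<or> e = {a, d} \<or> e = {b, d}"
proof -
  obtain x y where e: "e = {x, y}" "x \<noteq> y" using assms(2) by (auto simp: card_2_iff)
  then show ?thesis using assms(1) by (auto simp: insert_commute)
qed

lemma pair3:
  assumes g: "good c V E k" and k: "k \<le> 2" and c2: "\<forall>e\<in>E. card e = 2"
    and abd: "a \<in> V" "b \<in> V" "d \<in> V" "a \<noteq> b" "b \<noteq> d" "a \<noteq> d"
  shows "({a,b}\<in>E \<and> {a,d}\<in>E \<and> c {a,b} \<noteq> c {a,d}) \<or> ({a,b}\<in>E \<and> {b,d}\<in>E \<and> c {a,b} \<noteq> c {b,d})
     \<or> ({a,d}\<in>E \<and> {b,d}\<in>E \<and> c {a,d} \<noteq> c {b,d})"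
proof -
  have S: "{a, b, d} \<subseteq> V" "card {a, b, d} = 3" using abd by auto
  then obtain T where T: "T \<subseteq> E" "is_tree T" "{a, b, d} \<subseteq> \<Union>T" "inj_on c T"
    using g unfolding good_def by blast
  have finT: "finite T" using T(2) by (simp add: is_tree_def)
  have "c ` T \<subseteq> {..<k}" using g T(1) unfolding good_def by auto
  then have "card (c ` T) \<le> k" by (metis card_lessThan card_mono finite_lessThan)
  then have cT: "card T \<le> 2" using card_image[OF T(4)] k by simp
  have fU: "finite (\<Union>T)" using tree_finite_union[OF T(2)] .
  have "card (\<Union>T) \<le> 3" using T(2) cT by (simp add: is_tree_def)
  moreover have "card {a, b, d} \<le> card (\<Union>T)" by (rule card_mono[OF fU T(3)])
  ultimately have "card {a, b, d} = card (\<Union>T)" using S(2) by linarith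
  then have U: "\<Union>T = {a, b, d}" using card_subset_eq[OF fU T(3)] by simp
  then have "card T = 2" using T(2) S by (simp add: is_tree_def)
  then obtain e1 e2 where e: "T = {e1, e2}" "e1 \<noteq> e2" by (auto simp: card_2_iff)
  have s1: "e1 \<subseteq> {a,b,d}" and s2: "e2 \<subseteq> {a,b,d}" using U e by auto
  have k1: "card e1 = 2" and k2: "card e2 = 2" using c2 T(1) e by auto
  have "e1 = {a, b} \<or> e1 = {a, d} \<or> e1 = {b, d}" by (rule two_subset3[OF s1 k1])
  moreover have "e2 = {a, b} \<or> e2 = {a, d} \<or> e2 = {b, d}" by (rule two_subset3[OF s2 k2])
  moreover have "c e1 \<noteq> c e2" using T(4) e by auto
  moreover have "e1 \<in> E" "e2 \<in> E" using T(1) e by auto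
  ultimately show ?thesis using e(2) by (auto simp: insert_commute)
qed

lemma nat2_cases: "(a::nat) < 2 \<Longrightarrow> b < 2 \<Longrightarrow> d < 2 \<Longrightarrow> a \<noteq> b \<Longrightarrow> a \<noteq> d \<Longrightarrow> b = d"
  by linarith

lemma lower3:
  assumes g: "good c V E k" and c2: "\<forall>e\<in>E. card e = 2"
    and V: "u \<in> V" "v \<in> V" "x \<in> V" "y \<in> V" "z \<in> V"
    and d: "u \<noteq> v" "u \<noteq> x" "u \<noteq> y" "u \<noteq> z" "v \<noteq> x" "v \<noteq> y" "v \<noteq> z" "x \<noteq> y" "x \<noteq> z" "y \<noteq> z"
    and nuv: "{u, v} \<notin> E"
  shows "3 \<le> k"
proof (rule ccontr)
  assume "\<not> 3 \<le> k" then have k: "k \<le> 2" by simp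
  have bd: "\<And>e. e \<in> E \<Longrightarrow> c e < 2" using g k unfolding good_def by fastforce
  note P = pair3[OF g k c2]
  have uv: "{u,w}\<in>E \<and> {v,w}\<in>E \<and> c {u,w} \<noteq> c {v,w}" if "w \<in> V" "w \<noteq> u" "w \<noteq> v" for w
    using P[of u v w] V that d nuv by blast
  have key: False if pq: "p \<in> V" "q \<in> V" "p \<noteq> u" "p \<noteq> v" "q \<noteq> u" "q \<noteq> v" "p \<noteq> q"
    and eq: "c {u,p} = c {u,q}" for p q
  proof -
    have hp: "{u,p}\<in>E" "{v,p}\<in>E" "c {u,p} \<noteq> c {v,p}" using uv[of p] pq by auto
    have hq: "{u,q}\<in>E" "{v,q}\<in>E" "c {u,q} \<noteq> c {v,q}" using uv[of q] pq by auto
    have b1: "c {u,p} < 2" "c {v,p} < 2" "c {u,q} < 2" "c {v,q} < 2" using bd hp hq by auto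
    have eqv: "c {v,p} = c {v,q}" using nat2_cases[OF b1(1) b1(2) b1(4)] hp(3) hq(3) eq by auto
    have Pu: "{p,q} \<in> E \<and> c {p,q} \<noteq> c {u,p}"
      using P[of u p q] V pq d eq by (auto simp: insert_commute)
    have Pv: "{p,q} \<in> E \<and> c {p,q} \<noteq> c {v,p}"
      using P[of v p q] V pq d eqv by (auto simp: insert_commute)
    have "c {p,q} < 2" using bd Pu by auto
    then show False using nat2_cases[OF b1(1) b1(2)] Pu Pv hp(3) by metis
  qed
  have bx: "c {u,x} < 2" "c {u,y} < 2" "c {u,z} < 2" using bd uv V d by auto
  have "c {u,x} = c {u,y} \<or> c {u,x} = c {u,z} \<or> c {u,y} = c {u,z}" using bx by linarith
  then show False using key V d by metis
qed

lemma rx3_ge3: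
  assumes g: "good c0 V E k0" and c2: "\<forall>e\<in>E. card e = 2"
    and V: "u \<in> V" "v \<in> V" "x \<in> V" "y \<in> V" "z \<in> V"
    and d: "u \<noteq> v" "u \<noteq> x" "u \<noteq> y" "u \<noteq> z" "v \<noteq> x" "v \<noteq> y" "v \<noteq> z" "x \<noteq> y" "x \<noteq> z" "y \<noteq> z"
    and nuv: "{u, v} \<notin> E"
  shows "3 \<le> rx3 V E"
proof -
  obtain c where "good c V E (rx3 V E)" using rx3_good[OF g] by blast
  then show ?thesis by (rule lower3[OF _ c2 V d nuv])
qed



lemma tree2: "a \<noteq> b \<Longrightarrow> a \<noteq> d \<Longrightarrow> b \<noteq> d \<Longrightarrow> is_tree {{a, b}, {a, d}}"
proof -
  assume h: "a \<noteq> b" "a \<noteq> d" "b \<noteq> d"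
  have "is_tree (insert {a, d} {{a, b}})"
    by (rule leaf_tree[OF single_edge_tree[OF h(1)]]) (use h in auto)
  then show ?thesis by (simp add: insert_commute)
qed

lemma star3: "distinct [a, b, d, e] \<Longrightarrow> is_tree {{a, b}, {a, d}, {a, e}}"
proof -
  assume h: "distinct [a, b, d, e]"
  have t: "is_tree {{a, b}, {a, d}}" using h by (intro tree2) auto
  have "is_tree (insert {a, e} {{a, b}, {a, d}})"
    by (rule leaf_tree[OF t]) (use h in auto)
  then show ?thesis by (simp add: insert_commute)
qed

lemma path4: "distinct [a, b, d, e] \<Longrightarrow> is_tree {{a, b}, {b, d}, {d, e}}"
proof -
  assume h: "distinct [a, b, d, e]"
  have t: "is_tree {{b, a}, {b, d}}" using h by (intro tree2) auto
  have "is_tree (insert {d, e} {{b, a}, {b, d}})"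
    by (rule leaf_tree[OF t]) (use h in auto)
  then show ?thesis by (simp add: insert_commute)
qed

lemma rainbow_leaf: "inj_on c T \<Longrightarrow> c e \<notin> c ` T \<Longrightarrow> inj_on c (insert e T)"
  by (auto simp: inj_on_insert)

lemma lift_tree:
  assumes f: "inj f" and T: "is_tree T" and ic: "inj_on c' T" and eq: "\<And>e. e \<in> T \<Longrightarrow> c (f ` e) = c' e"
  shows "is_tree (image f ` T) \<and> inj_on c (image f ` T) \<and> \<Union>(image f ` T) = f ` \<Union>T"
proof (intro conjI)
  show "is_tree (image f ` T)" using image_tree[OF T inj_on_subset[OF f subset_UNIV]] .
  have "inj_on (c \<circ> image f) T" using ic eq by (simp add: inj_on_def)
  then show "inj_on c (image f ` T)" by (rule inj_on_imageI)
qed auto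

lemma transport:
  assumes g: "good c1 V1 E1 k" and sub: "\<forall>e\<in>E1. e \<subseteq> V1" and inj: "inj_on \<phi> V1"
    and im: "\<phi> ` V1 = V2" and ed: "\<forall>e\<in>E1. \<phi> ` e \<in> E2" and k: "0 < k"
  shows "\<exists>c. good c V2 E2 k"
proof -
  define \<psi> where "\<psi> = inv_into V1 \<phi>"
  define c2 where "c2 e = (if \<psi> ` e \<in> E1 then c1 (\<psi> ` e) else 0)" for e
  have psiphi: "\<psi> ` \<phi> ` e = e" if "e \<subseteq> V1" for e
    using that inj unfolding \<psi>_def by (auto simp: image_image inv_into_f_f subset_iff)
  have c2e: "c2 (\<phi> ` e) = c1 e" if "e \<in> E1" for e using that psiphi sub unfolding c2_def by auto
  have "good c2 V2 E2 k" unfolding good_def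
  proof (intro conjI allI impI ballI)
    fix e assume "e \<in> E2" then show "c2 e < k" using g k unfolding c2_def good_def by auto
  next
    fix S assume S: "S \<subseteq> V2" "card S = 3"
    have injpsi: "inj_on \<psi> V2" unfolding \<psi>_def using im inj_on_inv_into by blast
    have S1: "\<psi> ` S \<subseteq> V1" using S(1) im unfolding \<psi>_def by (auto intro: inv_into_into)
    have "card (\<psi> ` S) = 3" using card_image[OF inj_on_subset[OF injpsi S(1)]] S by simp
    then obtain T where T: "T \<subseteq> E1" "is_tree T" "\<psi> ` S \<subseteq> \<Union>T" "inj_on c1 T"
      using g S1 unfolding good_def by blast
    have UT: "\<Union>T \<subseteq> V1" using T(1) sub by blast
    have tree: "is_tree (image \<phi> ` T)" using image_tree[OF T(2) inj_on_subset[OF inj UT]] .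
    have "image \<phi> ` T \<subseteq> E2" using T(1) ed by blast
    moreover have "S \<subseteq> \<Union>(image \<phi> ` T)"
    proof
      fix x assume "x \<in> S"
      then have "\<psi> x \<in> \<Union>T" "\<phi> (\<psi> x) = x" using T(3) S(1) im unfolding \<psi>_def
        by (auto intro: f_inv_into_f)
      then show "x \<in> \<Union>(image \<phi> ` T)" by (metis UnionE UnionI imageI)
    qed
    moreover have "inj_on c2 (image \<phi> ` T)"
    proof (rule inj_on_imageI)
      show "inj_on (c2 \<circ> image \<phi>) T"
      proof (rule inj_onI)
        fix e1 e2 assume "e1 \<in> T" "e2 \<in> T" "(c2 \<circ> image \<phi>) e1 = (c2 \<circ> image \<phi>) e2"
        then have "c1 e1 = c1 e2" using T(1) c2e by (metis comp_apply subsetD)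
        then show "e1 = e2" using T(4) \<open>e1 \<in> T\<close> \<open>e2 \<in> T\<close> by (simp add: inj_on_eq_iff)
      qed
    qed
    ultimately show "\<exists>T. T \<subseteq> E2 \<and> is_tree T \<and> S \<subseteq> \<Union>T \<and> inj_on c2 T" using tree by blast
  qed
  then show ?thesis by blast
qed

lemma join_triples:
  assumes S: "S \<subseteq> join_V VG VH" "card S = 3"
    and c3: "\<And>a b d. a \<in> VG \<Longrightarrow> b \<in> VG \<Longrightarrow> d \<in> VG \<Longrightarrow> a \<noteq> b \<Longrightarrow> b \<noteq> d \<Longrightarrow> a \<noteq> d \<Longrightarrow> Q {Inl a, Inl b, Inl d}"
    and c21: "\<And>a b x. a \<in> VG \<Longrightarrow> b \<in> VG \<Longrightarrow> x \<in> VH \<Longrightarrow> a \<noteq> b \<Longrightarrow> Q {Inl a, Inl b, Inr x}"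
    and c12: "\<And>a x y. a \<in> VG \<Longrightarrow> x \<in> VH \<Longrightarrow> y \<in> VH \<Longrightarrow> x \<noteq> y \<Longrightarrow> Q {Inl a, Inr x, Inr y}"
    and c03: "\<And>x y z. x \<in> VH \<Longrightarrow> y \<in> VH \<Longrightarrow> z \<in> VH \<Longrightarrow> x \<noteq> y \<Longrightarrow> y \<noteq> z \<Longrightarrow> x \<noteq> z \<Longrightarrow> Q {Inr x, Inr y, Inr z}"
  shows "Q S"
proof -
  define A where "A = Inl -` S"
  define B where "B = Inr -` S"
  have SAB: "S = Inl ` A \<union> Inr ` B" unfolding A_def B_def using S(1)
    by (auto simp: join_V_def)
  have finS: "finite S" using S(2) by (metis card.infinite zero_neq_numeral)
  have fA: "finite A" "finite B" unfolding A_def B_def using finS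
    by (auto intro: finite_vimageI)
  have AV: "A \<subseteq> VG" "B \<subseteq> VH" using S(1) unfolding A_def B_def join_V_def by auto
  have "card (Inl ` A \<union> Inr ` B) = card A + card B"
    using fA card_Plus by (metis Plus_def)
  then have cAB: "card A + card B = 3" using S(2) SAB by simp
  consider "card A = 3" "card B = 0" | "card A = 2" "card B = 1" | "card A = 1" "card B = 2" | "card A = 0" "card B = 3"
    using cAB by linarith
  then show ?thesis
  proof cases
    case 1
    then obtain a b d where "A = {a, b, d}" "a \<noteq> b" "b \<noteq> d" "a \<noteq> d" by (auto simp: card_3_iff)
    moreover have "B = {}" using 1 fA by simp
    ultimately have "S = {Inl a, Inl b, Inl d}" "a \<in> VG" "b \<in> VG" "d \<in> VG" "a \<noteq> b" "b \<noteq> d" "a \<noteq> d"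
      using SAB AV by auto
    then show ?thesis using c3 by simp
  next
    case 2
    then obtain a b where "A = {a, b}" "a \<noteq> b" by (auto simp: card_2_iff)
    moreover obtain x where "B = {x}" using 2 by (auto simp: card_1_singleton_iff)
    ultimately have "S = {Inl a, Inl b, Inr x}" "a \<in> VG" "b \<in> VG" "x \<in> VH" "a \<noteq> b"
      using SAB AV by auto
    then show ?thesis using c21 by simp
  next
    case 3
    then obtain a where "A = {a}" by (auto simp: card_1_singleton_iff)
    moreover obtain x y where "B = {x, y}" "x \<noteq> y" using 3 by (auto simp: card_2_iff)
    ultimately have "S = {Inl a, Inr x, Inr y}" "a \<in> VG" "x \<in> VH" "y \<in> VH" "x \<noteq> y"
      using SAB AV by auto
    then show ?thesis using c12 by simp
  next
    case 4
    then obtain x y z where "B = {x, y, z}" "x \<noteq> y" "y \<noteq> z" "x \<noteq> z" by (auto simp: card_3_iff)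
    moreover have "A = {}" using 4 fA by simp
    ultimately have "S = {Inr x, Inr y, Inr z}" "x \<in> VH" "y \<in> VH" "z \<in> VH" "x \<noteq> y" "y \<noteq> z" "x \<noteq> z"
      using SAB AV by auto
    then show ?thesis using c03 by simp
  qed
qed



definition tri :: "nat \<Rightarrow> nat \<Rightarrow> nat" where
  "tri i j = (if j < i then 0 else if j = i then 1 else 2)"

definition col :: "(nat + nat) set \<Rightarrow> nat" where
  "col e = tri (LEAST i. Inl i \<in> e) (LEAST j. Inr j \<in> e)"

lemma least_eq[simp]: "(LEAST x::nat. x = i) = i"
  by (rule Least_equality) auto

lemma col_eq[simp]: "col {Inl i, Inr j} = tri i j" "col {Inr j, Inl i} = tri i j"
  unfolding col_def by simp_all

lemma kE1[simp]: "i < s \<Longrightarrow> j < t \<Longrightarrow> {Inl i, Inr j} \<in> Kbip_E s t"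
  unfolding Kbip_E_def by blast

lemma kE2[simp]: "i < s \<Longrightarrow> j < t \<Longrightarrow> {Inr j, Inl i} \<in> Kbip_E s t"
proof -
  assume "i < s" "j < t"
  then have "{Inl i, Inr j} \<in> Kbip_E s t" by simp
  moreover have "{Inr j, Inl i} = {Inl i, (Inr j :: nat + nat)}" by blast
  ultimately show ?thesis by simp
qed

lemma sort3:
  assumes "\<And>a b d. a < b \<Longrightarrow> b < d \<Longrightarrow> P {a, b, d}" "a \<noteq> b" "b \<noteq> d" "a \<noteq> d"
  shows "P {a::nat, b, d}"
proof -
  consider "a < b" "b < d" | "a < d" "d < b" | "b < a" "a < d" | "b < d" "d < a" | "d < a" "a < b" | "d < b" "b < a"
    using assms(2-4) by linarith
  then show ?thesis
  proof cases
    case 1 then show ?thesis using assms(1) by blast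
  next
    case 2 then show ?thesis using assms(1)[of a d b] by (simp add: insert_commute)
  next
    case 3 then show ?thesis using assms(1)[of b a d] by (simp add: insert_commute)
  next
    case 4 then show ?thesis using assms(1)[of b d a] by (simp add: insert_commute)
  next
    case 5 then show ?thesis using assms(1)[of d a b] by (simp add: insert_commute)
  next
    case 6 then show ?thesis using assms(1)[of d b a] by (simp add: insert_commute)
  qed
qed

abbreviation "QK s S \<equiv> \<exists>T. T \<subseteq> Kbip_E s s \<and> is_tree T \<and> S \<subseteq> \<Union>T \<and> inj_on col T"

lemma K_AAA: "a < b \<Longrightarrow> b < d \<Longrightarrow> d < s \<Longrightarrow> QK s {Inl a, Inl b, Inl d}"
  apply (rule exI[of _ "{{Inr b, Inl a}, {Inr b, Inl b}, {Inr b, Inl d}}"])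
  apply (intro conjI star3)
  apply (auto simp: tri_def)
  done

lemma K_BBB: "a < b \<Longrightarrow> b < d \<Longrightarrow> d < s \<Longrightarrow> QK s {Inr a, Inr b, Inr d}"
  apply (rule exI[of _ "{{Inl b, Inr a}, {Inl b, Inr b}, {Inl b, Inr d}}"])
  apply (intro conjI star3)
  apply (auto simp: tri_def)
  done

lemma K_AAB: 
  assumes "a < b" "b < s" "x < s"
  shows "QK s {Inl a, Inl b, Inr x}"
proof -
  consider "tri a x \<noteq> tri b x" | "x < a" | "b < x"
    using assms unfolding tri_def by (cases "x < a"; cases "b < x"; auto split: if_splits)
  then show ?thesis
  proof cases
    case 1 then show ?thesis
      apply -
      apply (rule exI[of _ "{{Inr x, Inl a}, {Inr x, Inl b}}"])
      using assms by (auto intro!: tree2)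
  next
    case 2 then show ?thesis
      apply -
      apply (rule exI[of _ "{{Inr x, Inl a}, {Inl a, Inr b}, {Inr b, Inl b}}"])
      using assms by (auto intro!: path4 simp: tri_def)
  next
    case 3 then show ?thesis
      apply -
      apply (rule exI[of _ "{{Inr x, Inl b}, {Inl b, Inr a}, {Inr a, Inl a}}"])
      using assms by (auto intro!: path4 simp: tri_def)
  qed
qed

lemma K_ABB: 
  assumes "x < y" "y < s" "a < s"
  shows "QK s {Inl a, Inr x, Inr y}"
proof -
  consider "tri a x \<noteq> tri a y" | "y < a" | "a < x"
    using assms unfolding tri_def by (cases "y < a"; cases "a < x"; auto split: if_splits)
  then show ?thesis
  proof cases
    case 1 then show ?thesis
      apply -
      apply (rule exI[of _ "{{Inl a, Inr x}, {Inl a, Inr y}}"])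
      using assms by (auto intro!: tree2)
  next
    case 2 then show ?thesis
      apply -
      apply (rule exI[of _ "{{Inl a, Inr x}, {Inr x, Inl x}, {Inl x, Inr y}}"])
      using assms by (auto intro!: path4 simp: tri_def)
  next
    case 3 then show ?thesis
      apply -
      apply (rule exI[of _ "{{Inl a, Inr y}, {Inr y, Inl y}, {Inl y, Inr x}}"])
      using assms by (auto intro!: path4 simp: tri_def)
  qed
qed



lemma K_good: "good col (Kbip_V s s) (Kbip_E s s) 3"
  unfolding good_def
proof (intro conjI allI impI ballI)
  fix e assume "e \<in> Kbip_E s s"
  then obtain i j where "e = {Inl i, Inr j}" unfolding Kbip_E_def by blast
  then show "col e < 3" by (simp add: tri_def)
next
  fix S assume S: "S \<subseteq> Kbip_V s s" "card S = 3"
  have V: "Kbip_V s s = join_V {0..<s} {0..<s}" by (simp add: Kbip_V_def join_V_def)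
  show "QK s S"
  proof (rule join_triples[OF S[unfolded V]])
    fix a b d assume h: "a \<in> {0..<s}" "b \<in> {0..<s}" "d \<in> {0..<s}" "a \<noteq> b" "b \<noteq> d" "a \<noteq> d"
    have "{a, b, d} \<subseteq> {0..<s} \<longrightarrow> QK s (Inl ` {a, b, d})"
      apply (rule sort3[OF _ h(4-6)])
      apply (intro impI)
      apply (simp only: image_insert image_empty)
      apply (rule K_AAA)
      apply auto
      done
    then show "QK s {Inl a, Inl b, Inl d}" using h by simp
  next
    fix a b d assume h: "a \<in> {0..<s}" "b \<in> {0..<s}" "d \<in> {0..<s}" "a \<noteq> b" "b \<noteq> d" "a \<noteq> d"
    have "{a, b, d} \<subseteq> {0..<s} \<longrightarrow> QK s (Inr ` {a, b, d})"
      apply (rule sort3[OF _ h(4-6)])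
      apply (intro impI)
      apply (simp only: image_insert image_empty)
      apply (rule K_BBB)
      apply auto
      done
    then show "QK s {Inr a, Inr b, Inr d}" using h by simp
  next
    fix a b x assume h: "a \<in> {0..<s}" "b \<in> {0..<s}" "x \<in> {0..<s}" "a \<noteq> b"
    show "QK s {Inl a, Inl b, Inr x}"
    proof (cases "a < b")
      case True then show ?thesis using K_AAB h by simp
    next
      case False then have "b < a" using h by simp
      then have "QK s {Inl b, Inl a, Inr x}" using K_AAB h by simp
      then show ?thesis by (simp add: insert_commute)
    qed
  next
    fix a x y assume h: "a \<in> {0..<s}" "x \<in> {0..<s}" "y \<in> {0..<s}" "x \<noteq> y"
    show "QK s {Inl a, Inr x, Inr y}"
    proof (cases "x < y")
      case True then show ?thesis using K_ABB h by simp
    next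
      case False then have "y < x" using h by simp
      then have "QK s {Inl a, Inr y, Inr x}" using K_ABB h by simp
      then show ?thesis by (simp add: insert_commute)
    qed
  qed
qed

lemma is_path2: "a \<noteq> b \<Longrightarrow> {a, b} \<in> E \<Longrightarrow> is_path E [a, b]"
  by (rule is_path_cons) auto

lemma is_path3: "distinct [a, b, d] \<Longrightarrow> {a, b} \<in> E \<Longrightarrow> {b, d} \<in> E \<Longrightarrow> is_path E [a, b, d]"
  by (rule is_path_cons) (auto intro: is_path2)

lemma K_connected:
  assumes "0 < s" "0 < t"
  shows "connected_graph (Kbip_V s t) (Kbip_E s t)"
  unfolding connected_graph_def graph_def
proof (intro conjI ballI)
  show "finite (Kbip_V s t)" by (simp add: Kbip_V_def)
  show "Kbip_V s t \<noteq> {}" using assms by (auto simp: Kbip_V_def)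
  fix e assume "e \<in> Kbip_E s t"
  then obtain i j where "e = {Inl i, Inr j}" "i < s" "j < t" unfolding Kbip_E_def by blast
  then show "e \<subseteq> Kbip_V s t" "card e = 2" by (auto simp: Kbip_V_def)
next
  fix u v assume u: "u \<in> Kbip_V s t" and v: "v \<in> Kbip_V s t"
  show "\<exists>xs. path_between (Kbip_E s t) xs u v"
  proof (cases "u = v")
    case True then show ?thesis by (intro exI[of _ "[u]"]) (simp add: path_between_def)
  next
    case False
    show ?thesis
    proof (cases u)
      case (Inl i)
      show ?thesis
      proof (cases v)
        case (Inl i')
        have "is_path (Kbip_E s t) [Inl i, Inr 0, Inl i']"
          using False u v Inl \<open>u = Inl i\<close> assms by (intro is_path3) (auto simp: Kbip_V_def)
        then show ?thesis using Inl \<open>u = Inl i\<close> by (intro exI[of _ "[Inl i, Inr 0, Inl i']"]) (simp add: path_between_def)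
      next
        case (Inr j)
        have "is_path (Kbip_E s t) [Inl i, Inr j]"
          using u v Inr \<open>u = Inl i\<close> by (intro is_path2) (auto simp: Kbip_V_def)
        then show ?thesis using Inr \<open>u = Inl i\<close> by (intro exI[of _ "[Inl i, Inr j]"]) (simp add: path_between_def)
      qed
    next
      case (Inr j)
      show ?thesis
      proof (cases v)
        case (Inl i)
        have "is_path (Kbip_E s t) [Inr j, Inl i]"
          using u v Inl \<open>u = Inr j\<close> by (intro is_path2) (auto simp: Kbip_V_def)
        then show ?thesis using Inl \<open>u = Inr j\<close> by (intro exI[of _ "[Inr j, Inl i]"]) (simp add: path_between_def)
      next
        case (Inr j')
        have "is_path (Kbip_E s t) [Inr j, Inl 0, Inr j']"
          using False u v Inr \<open>u = Inr j\<close> assms by (intro is_path3) (auto simp: Kbip_V_def)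
        then show ?thesis using Inr \<open>u = Inr j\<close> by (intro exI[of _ "[Inr j, Inl 0, Inr j']"]) (simp add: path_between_def)
      qed
    qed
  qed
qed

lemma jE_cross[simp]: "u \<in> VG \<Longrightarrow> v \<in> VH \<Longrightarrow> {Inl u, Inr v} \<in> join_E VG EG VH EH"
  unfolding join_E_def by blast

lemma jE_cross'[simp]: "u \<in> VG \<Longrightarrow> v \<in> VH \<Longrightarrow> {Inr v, Inl u} \<in> join_E VG EG VH EH"
  using jE_cross[of u VG v VH EG EH] by (simp add: insert_commute)

lemma jE_G: "e \<in> EG \<Longrightarrow> Inl ` e \<in> join_E VG EG VH EH"
  unfolding join_E_def by blast

lemma jE_H: "e \<in> EH \<Longrightarrow> Inr ` e \<in> join_E VG EG VH EH"
  unfolding join_E_def by blast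

lemma K_to_join:
  assumes g: "good c (Kbip_V s t) (Kbip_E s t) k" and k: "0 < k"
    and fin: "finite VG" "finite VH" and cs: "card VG = s" "card VH = t"
  shows "\<exists>c. good c (join_V VG VH) (join_E VG EG VH EH) k"
proof -
  obtain g where gb: "bij_betw g {0..<s} VG" using ex_bij_betw_nat_finite[OF fin(1)] cs by blast
  obtain h where hb: "bij_betw h {0..<t} VH" using ex_bij_betw_nat_finite[OF fin(2)] cs by blast
  have inj: "inj_on (map_sum g h) (Kbip_V s t)"
  proof (rule inj_onI)
    fix p q assume "p \<in> Kbip_V s t" "q \<in> Kbip_V s t" "map_sum g h p = map_sum g h q"
    then show "p = q" using gb hb unfolding Kbip_V_def bij_betw_def
      by (auto simp: inj_on_eq_iff)
  qed
  have gi: "g ` {0..<s} = VG" and hi: "h ` {0..<t} = VH" using gb hb by (auto simp: bij_betw_def)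
  have im: "map_sum g h ` Kbip_V s t = join_V VG VH"
    unfolding Kbip_V_def join_V_def by (simp add: image_Un image_image flip: gi hi)
  have sub: "\<forall>e\<in>Kbip_E s t. e \<subseteq> Kbip_V s t" unfolding Kbip_E_def Kbip_V_def by auto
  have ed: "\<forall>e\<in>Kbip_E s t. map_sum g h ` e \<in> join_E VG EG VH EH"
  proof
    fix e assume "e \<in> Kbip_E s t"
    then obtain i j where "e = {Inl i, Inr j}" "i < s" "j < t" unfolding Kbip_E_def by blast
    moreover have "g i \<in> VG" "h j \<in> VH" using gb hb \<open>i < s\<close> \<open>j < t\<close> unfolding bij_betw_def by auto
    ultimately show "map_sum g h ` e \<in> join_E VG EG VH EH" by simp
  qed
  show ?thesis by (rule transport[OF g sub inj im ed k])
qed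



lemma lift_join:
  assumes f: "inj f" and T: "T \<subseteq> E0" "is_tree T" "inj_on c0 T"
    and h: "\<And>e. e \<in> E0 \<Longrightarrow> c (f ` e) = c0 e \<and> f ` e \<in> E \<and> c0 e < k"
  shows "\<exists>T1. T1 \<subseteq> E \<and> is_tree T1 \<and> inj_on c T1 \<and> \<Union>T1 = f ` \<Union>T \<and> (\<forall>e\<in>T1. c e < k)"
proof -
  have "is_tree (image f ` T) \<and> inj_on c (image f ` T) \<and> \<Union>(image f ` T) = f ` \<Union>T"
    using lift_tree[OF f T(2,3)] h T(1) by blast
  moreover have "image f ` T \<subseteq> E" "\<forall>e\<in>image f ` T. c e < k" using h T(1) by auto
  ultimately show ?thesis by blast
qed

lemma add_leaf:
  assumes "T1 \<subseteq> E" "is_tree T1" "inj_on c T1" "x \<in> \<Union>T1" "y \<notin> \<Union>T1" "{x, y} \<in> E" "c {x, y} \<notin> c ` T1"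
  shows "insert {x, y} T1 \<subseteq> E \<and> is_tree (insert {x, y} T1) \<and> inj_on c (insert {x, y} T1)
     \<and> \<Union>(insert {x, y} T1) = insert y (\<Union>T1)"
  using assms leaf_tree[of T1 x y] rainbow_leaf[of c T1 "{x,y}"] by auto

lemma third:
  assumes "finite V" "card V \<ge> 3" "x \<in> V" "y \<in> V"
  shows "\<exists>z\<in>V. z \<noteq> x \<and> z \<noteq> y"
proof (rule ccontr)
  assume "\<not> ?thesis" then have "V \<subseteq> {x, y}" by auto
  then have "card V \<le> card {x, y}" by (intro card_mono) auto
  moreover have "card {x, y} \<le> 2" by (cases "x = y") auto
  ultimately have "card V \<le> 2" by linarith
  then show False using assms by simp
qed

lemma good_tree3:
  assumes "good c V E k" "x \<in> V" "y \<in> V" "z \<in> V" "x \<noteq> y" "y \<noteq> z" "x \<noteq> z"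
  shows "\<exists>T. T \<subseteq> E \<and> is_tree T \<and> {x, y, z} \<subseteq> \<Union>T \<and> inj_on c T"
  using assms unfolding good_def by (metis card_3_iff empty_subsetI insert_subset)

lemma conn_props:
  assumes "connected_graph V E"
  shows "finite V" "\<forall>e\<in>E. e \<subseteq> V \<and> card e = 2"
  using assms by (auto simp: connected_graph_def graph_def)

lemma vimage_Inr[simp]: "Inr -` (Inr ` e) = e" "Inl -` (Inl ` e) = e"
  by auto



lemma part1:
  fixes VG :: "'a set" and VH :: "'b set"
  assumes cG: "connected_graph VG EG" and cH: "connected_graph VH EH"
    and s1: "card VG = 1" and t3: "card VH \<ge> 3"
  shows "rx3 (join_V VG VH) (join_E VG EG VH EH) \<le> rx3 VH EH + 1"
proof -
  obtain g where VG: "VG = {g}" using s1 by (auto simp: card_1_singleton_iff)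
  have EG: "EG = {}"
  proof (rule ccontr)
    assume "EG \<noteq> {}" then obtain e where "e \<in> EG" by blast
    then have "e \<subseteq> {g}" "card e = 2" using conn_props(2)[OF cG] VG by auto
    then have "card e \<le> 1" by (metis card.empty card.insert card_mono finite.emptyI finite.insertI empty_iff One_nat_def)
    then show False using \<open>card e = 2\<close> by simp
  qed
  have finH: "finite VH" and eH: "\<forall>e\<in>EH. e \<subseteq> VH \<and> card e = 2" using conn_props[OF cH] by auto
  obtain k0 c0 where "good c0 VH EH k0" using exists_good[OF cH] by blast
  then obtain cH where gH: "good cH VH EH (rx3 VH EH)" using rx3_good by blast
  define kH where "kH = rx3 VH EH"
  define c :: "('a + 'b) set \<Rightarrow> nat" where "c e = (if e \<subseteq> range Inr then cH (Inr -` e) else kH)" for e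
  have ch: "c (Inr ` e) = cH e" for e unfolding c_def by auto
  have hyp: "c (Inr ` e) = cH e \<and> Inr ` e \<in> join_E VG EG VH EH \<and> cH e < kH" if "e \<in> EH" for e
    using ch gH that jE_H[OF that] unfolding good_def kH_def by auto
  have cross: "c {Inr x, Inl u} = kH" for x u unfolding c_def by auto
  have "good c (join_V VG VH) (join_E VG EG VH EH) (kH + 1)"
    unfolding good_def
  proof (intro conjI allI impI ballI)
    fix e assume "e \<in> join_E VG EG VH EH"
    then consider (H) a where "a \<in> EH" "e = Inr ` a" | (X) u v where "e = {Inl u, Inr v}"
      unfolding join_E_def EG by blast
    then show "c e < kH + 1"
    proof cases
      case H then show ?thesis using hyp[OF H(1)] by auto
    next
      case X then show ?thesis unfolding c_def by auto
    qed
  next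
    fix S assume S: "S \<subseteq> join_V VG VH" "card S = 3"
    show "\<exists>T. T \<subseteq> join_E VG EG VH EH \<and> is_tree T \<and> S \<subseteq> \<Union>T \<and> inj_on c T"
    proof (rule join_triples[OF S])
      fix a b d assume "a \<in> VG" "b \<in> VG" "a \<noteq> b" then show "\<exists>T. T \<subseteq> join_E VG EG VH EH \<and> is_tree T \<and> {Inl a, Inl b, Inl d} \<subseteq> \<Union>T \<and> inj_on c T" using VG by auto
    next
      fix a b x assume "a \<in> VG" "b \<in> VG" "a \<noteq> b" then show "\<exists>T. T \<subseteq> join_E VG EG VH EH \<and> is_tree T \<and> {Inl a, Inl b, Inr x} \<subseteq> \<Union>T \<and> inj_on c T" using VG by auto
    next
      fix x y z assume h: "x \<in> VH" "y \<in> VH" "z \<in> VH" "x \<noteq> y" "y \<noteq> z" "x \<noteq> z"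
      obtain T where T: "T \<subseteq> EH" "is_tree T" "{x, y, z} \<subseteq> \<Union>T" "inj_on cH T"
        using good_tree3[OF gH h] by blast
      obtain T1 where T1: "T1 \<subseteq> join_E VG EG VH EH" "is_tree T1" "inj_on c T1" "\<Union>T1 = Inr ` \<Union>T"
        using lift_join[of Inr, OF _ T(1,2,4) hyp] by auto
      show "\<exists>T. T \<subseteq> join_E VG EG VH EH \<and> is_tree T \<and> {Inr x, Inr y, Inr z} \<subseteq> \<Union>T \<and> inj_on c T"
        using T1 T(3) by (intro exI[of _ T1]) auto
    next
      fix a x y assume h: "a \<in> VG" "x \<in> VH" "y \<in> VH" "x \<noteq> y"
      obtain z where z: "z \<in> VH" "z \<noteq> x" "z \<noteq> y" using third[OF finH t3 h(2,3)] by blast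
      obtain T where T: "T \<subseteq> EH" "is_tree T" "{x, y, z} \<subseteq> \<Union>T" "inj_on cH T"
        using good_tree3[OF gH h(2,3) z(1) h(4)] z by metis
      obtain T1 where T1: "T1 \<subseteq> join_E VG EG VH EH" "is_tree T1" "inj_on c T1" "\<Union>T1 = Inr ` \<Union>T"
        "\<forall>e\<in>T1. c e < kH"
        using lift_join[of Inr, OF _ T(1,2,4) hyp] by auto
      have L: "insert {Inr x, Inl a} T1 \<subseteq> join_E VG EG VH EH \<and> is_tree (insert {Inr x, Inl a} T1)
          \<and> inj_on c (insert {Inr x, Inl a} T1) \<and> \<Union>(insert {Inr x, Inl a} T1) = insert (Inl a) (\<Union>T1)"
      proof (rule add_leaf[OF T1(1-3)])
        show "Inr x \<in> \<Union>T1" using T1(4) T(3) by auto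
        show "Inl a \<notin> \<Union>T1" using T1(4) by auto
        show "{Inr x, Inl a} \<in> join_E VG EG VH EH" using h by simp
        show "c {Inr x, Inl a} \<notin> c ` T1" using T1(5) cross by fastforce
      qed
      show "\<exists>T. T \<subseteq> join_E VG EG VH EH \<and> is_tree T \<and> {Inl a, Inr x, Inr y} \<subseteq> \<Union>T \<and> inj_on c T"
        using L T1(4) T(3) by (intro exI[of _ "insert {Inr x, Inl a} T1"]) auto
    qed
  qed
  then show ?thesis unfolding kH_def by (rule rx3_le)
qed



lemma part3:
  fixes VG :: "'a set" and VH :: "'b set"
  assumes cG: "connected_graph VG EG" and cH: "connected_graph VH EH"
    and s3: "card VG \<ge> 3" and t3: "card VH \<ge> 3"
  shows "rx3 (join_V VG VH) (join_E VG EG VH EH) \<le> max (rx3 VG EG) (rx3 VH EH) + 1"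
proof -
  have finH: "finite VH" and eH: "\<forall>e\<in>EH. e \<subseteq> VH \<and> card e = 2" using conn_props[OF cH] by auto
  have finG: "finite VG" and eG: "\<forall>e\<in>EG. e \<subseteq> VG \<and> card e = 2" using conn_props[OF cG] by auto
  obtain k0 c0 where "good c0 VH EH k0" using exists_good[OF cH] by blast
  then obtain cH where gH: "good cH VH EH (rx3 VH EH)" using rx3_good by blast
  obtain k1 c1 where "good c1 VG EG k1" using exists_good[OF cG] by blast
  then obtain cG where gG: "good cG VG EG (rx3 VG EG)" using rx3_good by blast
  define m where "m = max (rx3 VG EG) (rx3 VH EH)"
  define c :: "('a + 'b) set \<Rightarrow> nat" where "c e = (if e \<subseteq> range Inr then cH (Inr -` e)
      else if e \<subseteq> range Inl then cG (Inl -` e) else m)" for e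
  have hypH: "c (Inr ` e) = cH e \<and> Inr ` e \<in> join_E VG EG VH EH \<and> cH e < m" if "e \<in> EH" for e
    using gH that jE_H[OF that] unfolding good_def m_def c_def by fastforce
  have hypG: "c (Inl ` e) = cG e \<and> Inl ` e \<in> join_E VG EG VH EH \<and> cG e < m" if "e \<in> EG" for e
  proof -
    have "e \<noteq> {}" using eG that by fastforce
    then have "\<not> Inl ` e \<subseteq> range Inr" by auto
    then show ?thesis using gG that jE_G[OF that] unfolding good_def m_def c_def by fastforce
  qed
  have cross: "c {Inr x, Inl u} = m" "c {Inl u, Inr x} = m" for x u unfolding c_def by auto
  have "good c (join_V VG VH) (join_E VG EG VH EH) (m + 1)"
    unfolding good_def
  proof (intro conjI allI impI ballI)
    fix e assume "e \<in> join_E VG EG VH EH"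
    then consider (H) a where "a \<in> EH" "e = Inr ` a" | (G) a where "a \<in> EG" "e = Inl ` a"
      | (X) u v where "e = {Inl u, Inr v}"
      unfolding join_E_def by blast
    then show "c e < m + 1"
    proof cases
      case H then show ?thesis using hypH[OF H(1)] by auto
    next
      case G then show ?thesis using hypG[OF G(1)] by auto
    next
      case X then show ?thesis using cross by auto
    qed
  next
    fix S assume S: "S \<subseteq> join_V VG VH" "card S = 3"
    show "\<exists>T. T \<subseteq> join_E VG EG VH EH \<and> is_tree T \<and> S \<subseteq> \<Union>T \<and> inj_on c T"
    proof (rule join_triples[OF S])
      fix x y z assume h: "x \<in> VG" "y \<in> VG" "z \<in> VG" "x \<noteq> y" "y \<noteq> z" "x \<noteq> z"
      obtain T where T: "T \<subseteq> EG" "is_tree T" "{x, y, z} \<subseteq> \<Union>T" "inj_on cG T"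
        using good_tree3[OF gG h] by blast
      obtain T1 where T1: "T1 \<subseteq> join_E VG EG VH EH" "is_tree T1" "inj_on c T1" "\<Union>T1 = Inl ` \<Union>T"
        using lift_join[of Inl, OF _ T(1,2,4) hypG] by auto
      show "\<exists>T. T \<subseteq> join_E VG EG VH EH \<and> is_tree T \<and> {Inl x, Inl y, Inl z} \<subseteq> \<Union>T \<and> inj_on c T"
        using T1 T(3) by (intro exI[of _ T1]) auto
    next
      fix x y z assume h: "x \<in> VH" "y \<in> VH" "z \<in> VH" "x \<noteq> y" "y \<noteq> z" "x \<noteq> z"
      obtain T where T: "T \<subseteq> EH" "is_tree T" "{x, y, z} \<subseteq> \<Union>T" "inj_on cH T"
        using good_tree3[OF gH h] by blast
      obtain T1 where T1: "T1 \<subseteq> join_E VG EG VH EH" "is_tree T1" "inj_on c T1" "\<Union>T1 = Inr ` \<Union>T"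
        using lift_join[of Inr, OF _ T(1,2,4) hypH] by auto
      show "\<exists>T. T \<subseteq> join_E VG EG VH EH \<and> is_tree T \<and> {Inr x, Inr y, Inr z} \<subseteq> \<Union>T \<and> inj_on c T"
        using T1 T(3) by (intro exI[of _ T1]) auto
    next
      fix a b x assume h: "a \<in> VG" "b \<in> VG" "x \<in> VH" "a \<noteq> b"
      obtain d where d: "d \<in> VG" "d \<noteq> a" "d \<noteq> b" using third[OF finG s3 h(1,2)] by blast
      obtain T where T: "T \<subseteq> EG" "is_tree T" "{a, b, d} \<subseteq> \<Union>T" "inj_on cG T"
        using good_tree3[OF gG h(1,2) d(1) h(4)] d by metis
      obtain T1 where T1: "T1 \<subseteq> join_E VG EG VH EH" "is_tree T1" "inj_on c T1" "\<Union>T1 = Inl ` \<Union>T"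
        "\<forall>e\<in>T1. c e < m"
        using lift_join[of Inl, OF _ T(1,2,4) hypG] by auto
      have L: "insert {Inl a, Inr x} T1 \<subseteq> join_E VG EG VH EH \<and> is_tree (insert {Inl a, Inr x} T1)
          \<and> inj_on c (insert {Inl a, Inr x} T1) \<and> \<Union>(insert {Inl a, Inr x} T1) = insert (Inr x) (\<Union>T1)"
      proof (rule add_leaf[OF T1(1-3)])
        show "Inl a \<in> \<Union>T1" using T1(4) T(3) by auto
        show "Inr x \<notin> \<Union>T1" using T1(4) by auto
        show "{Inl a, Inr x} \<in> join_E VG EG VH EH" using h by simp
        show "c {Inl a, Inr x} \<notin> c ` T1" using T1(5) cross by fastforce
      qed
      show "\<exists>T. T \<subseteq> join_E VG EG VH EH \<and> is_tree T \<and> {Inl a, Inl b, Inr x} \<subseteq> \<Union>T \<and> inj_on c T"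
        using L T1(4) T(3) by (intro exI[of _ "insert {Inl a, Inr x} T1"]) auto
    next
      fix a x y assume h: "a \<in> VG" "x \<in> VH" "y \<in> VH" "x \<noteq> y"
      obtain z where z: "z \<in> VH" "z \<noteq> x" "z \<noteq> y" using third[OF finH t3 h(2,3)] by blast
      obtain T where T: "T \<subseteq> EH" "is_tree T" "{x, y, z} \<subseteq> \<Union>T" "inj_on cH T"
        using good_tree3[OF gH h(2,3) z(1) h(4)] z by metis
      obtain T1 where T1: "T1 \<subseteq> join_E VG EG VH EH" "is_tree T1" "inj_on c T1" "\<Union>T1 = Inr ` \<Union>T"
        "\<forall>e\<in>T1. c e < m"
        using lift_join[of Inr, OF _ T(1,2,4) hypH] by auto
      have L: "insert {Inr x, Inl a} T1 \<subseteq> join_E VG EG VH EH \<and> is_tree (insert {Inr x, Inl a} T1)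
          \<and> inj_on c (insert {Inr x, Inl a} T1) \<and> \<Union>(insert {Inr x, Inl a} T1) = insert (Inl a) (\<Union>T1)"
      proof (rule add_leaf[OF T1(1-3)])
        show "Inr x \<in> \<Union>T1" using T1(4) T(3) by auto
        show "Inl a \<notin> \<Union>T1" using T1(4) by auto
        show "{Inr x, Inl a} \<in> join_E VG EG VH EH" using h by simp
        show "c {Inr x, Inl a} \<notin> c ` T1" using T1(5) cross by fastforce
      qed
      show "\<exists>T. T \<subseteq> join_E VG EG VH EH \<and> is_tree T \<and> {Inl a, Inr x, Inr y} \<subseteq> \<Union>T \<and> inj_on c T"
        using L T1(4) T(3) by (intro exI[of _ "insert {Inr x, Inl a} T1"]) auto
    qed
  qed
  then show ?thesis unfolding m_def by (rule rx3_le)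
qed



lemma part2:
  fixes VG :: "'a set" and VH :: "'b set"
  assumes cG: "connected_graph VG EG" and cH: "connected_graph VH EH"
    and s2: "card VG = 2"
  shows "rx3 (join_V VG VH) (join_E VG EG VH EH) \<le> rc VH EH + 3"
proof -
  obtain g1 g2 where VG: "VG = {g1, g2}" and g12: "g1 \<noteq> g2" using s2 by (auto simp: card_2_iff)
  have e12: "{g1, g2} \<in> EG"
  proof -
    obtain xs where p: "path_between EG xs g1 g2" using cG VG by (auto simp: connected_graph_def)
    then obtain T where T: "is_tree T" "T \<subseteq> path_edges xs" "g1 \<in> \<Union>T" by (metis path_tree g12)
    have "path_edges xs \<subseteq> EG" using p path_edges_subset by (auto simp: path_between_def)
    moreover obtain e where "e \<in> T" using T(1) by (auto simp: is_tree_def)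
    ultimately have "e \<in> EG" using T(2) by blast
    then have "e \<subseteq> {g1, g2}" "card e = 2" using conn_props(2)[OF cG] VG by auto
    then have "e = {g1, g2}" using card_subset_eq[of "{g1, g2}" e] g12 by simp
    then show ?thesis using \<open>e \<in> EG\<close> by simp
  qed
  obtain cR where gR: "rcgood cR VH EH (rc VH EH)" using rc_good[OF cH] by blast
  define r where "r = rc VH EH"
  define c :: "('a + 'b) set \<Rightarrow> nat" where "c e = (if e \<subseteq> range Inr then cR (Inr -` e)
      else if e \<subseteq> range Inl then r + 2 else if Inl g1 \<in> e then r else r + 1)" for e
  have hypH: "c (Inr ` e) = cR e \<and> Inr ` e \<in> join_E VG EG VH EH \<and> cR e < r" if "e \<in> EH" for e
    using gR that jE_H[OF that] unfolding rcgood_def r_def c_def by fastforce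
  have cross: "c {Inr x, Inl a} = (if a = g1 then r else r + 1)" for x a unfolding c_def by auto
  have cgg: "c {Inl g2, Inl g1} = r + 2" unfolding c_def by auto
  have htree: "\<exists>T1. T1 \<subseteq> join_E VG EG VH EH \<and> is_tree T1 \<and> inj_on c T1 \<and> \<Union>T1 \<subseteq> range Inr
      \<and> Inr x \<in> \<Union>T1 \<and> Inr y \<in> \<Union>T1 \<and> (\<forall>e\<in>T1. c e < r)"
    if h: "x \<in> VH" "y \<in> VH" "x \<noteq> y" for x y
  proof -
    obtain xs where xs: "path_between EH xs x y" "inj_on cR (path_edges xs)"
      using gR h unfolding rcgood_def by blast
    obtain T where T: "is_tree T" "T \<subseteq> path_edges xs" "x \<in> \<Union>T" "y \<in> \<Union>T"
      using path_tree[OF xs(1) h(3)] by blast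
    have "path_edges xs \<subseteq> EH" using xs path_edges_subset by (auto simp: path_between_def)
    then have TE: "T \<subseteq> EH" using T by blast
    have ic: "inj_on cR T" using inj_on_subset[OF xs(2) T(2)] .
    obtain T1 where T1: "T1 \<subseteq> join_E VG EG VH EH" "is_tree T1" "inj_on c T1" "\<Union>T1 = Inr ` \<Union>T"
        "\<forall>e\<in>T1. c e < r"
      using lift_join[of Inr, OF _ TE T(1) ic hypH] by auto
    then show ?thesis using T by (intro exI[of _ T1]) auto
  qed
  have "good c (join_V VG VH) (join_E VG EG VH EH) (r + 3)"
    unfolding good_def
  proof (intro conjI allI impI ballI)
    fix e assume "e \<in> join_E VG EG VH EH"
    then consider (H) a where "a \<in> EH" "e = Inr ` a" | (G) a where "a \<in> EG" "e = Inl ` a"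
      | (X) u v where "e = {Inl u, Inr v}"
      unfolding join_E_def by blast
    then show "c e < r + 3"
    proof cases
      case H then show ?thesis using hypH[OF H(1)] by auto
    next
      case G
      then have "a \<noteq> {}" using conn_props(2)[OF cG] by fastforce
      then have "\<not> Inl ` a \<subseteq> range Inr" by auto
      then show ?thesis using G unfolding c_def by auto
    next
      case X then show ?thesis unfolding c_def by auto
    qed
  next
    fix S assume S: "S \<subseteq> join_V VG VH" "card S = 3"
    show "\<exists>T. T \<subseteq> join_E VG EG VH EH \<and> is_tree T \<and> S \<subseteq> \<Union>T \<and> inj_on c T"
    proof (rule join_triples[OF S])
      fix a b d assume "a \<in> VG" "b \<in> VG" "d \<in> VG" "a \<noteq> b" "b \<noteq> d" "a \<noteq> d"
      then show "\<exists>T. T \<subseteq> join_E VG EG VH EH \<and> is_tree T \<and> {Inl a, Inl b, Inl d} \<subseteq> \<Union>T \<and> inj_on c T"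
        using VG by auto
    next
      fix a b x assume h: "a \<in> VG" "b \<in> VG" "x \<in> VH" "a \<noteq> b"
      have t: "is_tree {{Inr x, Inl a}, {Inr x, Inl b}}" using h by (intro tree2) auto
      have "c {Inr x, Inl a} \<noteq> c {Inr x, Inl b}" using h VG cross by auto
      then have "inj_on c {{Inr x, Inl a}, {Inr x, Inl b}}" by auto
      then show "\<exists>T. T \<subseteq> join_E VG EG VH EH \<and> is_tree T \<and> {Inl a, Inl b, Inr x} \<subseteq> \<Union>T \<and> inj_on c T"
        using t h by (intro exI[of _ "{{Inr x, Inl a}, {Inr x, Inl b}}"]) auto
    next
      fix a x y assume h: "a \<in> VG" "x \<in> VH" "y \<in> VH" "x \<noteq> y"
      obtain T1 where T1: "T1 \<subseteq> join_E VG EG VH EH" "is_tree T1" "inj_on c T1" "\<Union>T1 \<subseteq> range Inr"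
          "Inr x \<in> \<Union>T1" "Inr y \<in> \<Union>T1" "\<forall>e\<in>T1. c e < r"
        using htree[OF h(2-4)] by blast
      have L: "insert {Inr x, Inl a} T1 \<subseteq> join_E VG EG VH EH \<and> is_tree (insert {Inr x, Inl a} T1)
          \<and> inj_on c (insert {Inr x, Inl a} T1) \<and> \<Union>(insert {Inr x, Inl a} T1) = insert (Inl a) (\<Union>T1)"
      proof (rule add_leaf[OF T1(1-3) T1(5)])
        show "Inl a \<notin> \<Union>T1" using T1(4) by auto
        show "{Inr x, Inl a} \<in> join_E VG EG VH EH" using h by simp
        have "c {Inr x, Inl a} \<ge> r" using cross[of x a] by simp
        then show "c {Inr x, Inl a} \<notin> c ` T1" using T1(7) by fastforce
      qed
      show "\<exists>T. T \<subseteq> join_E VG EG VH EH \<and> is_tree T \<and> {Inl a, Inr x, Inr y} \<subseteq> \<Union>T \<and> inj_on c T"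
        using L T1 by (intro exI[of _ "insert {Inr x, Inl a} T1"]) auto
    next
      fix x y z assume h: "x \<in> VH" "y \<in> VH" "z \<in> VH" "x \<noteq> y" "y \<noteq> z" "x \<noteq> z"
      obtain T1 where T1: "T1 \<subseteq> join_E VG EG VH EH" "is_tree T1" "inj_on c T1" "\<Union>T1 \<subseteq> range Inr"
          "Inr x \<in> \<Union>T1" "Inr y \<in> \<Union>T1" "\<forall>e\<in>T1. c e < r"
        using htree[OF h(1,2,4)] by blast
      show "\<exists>T. T \<subseteq> join_E VG EG VH EH \<and> is_tree T \<and> {Inr x, Inr y, Inr z} \<subseteq> \<Union>T \<and> inj_on c T"
      proof (cases "Inr z \<in> \<Union>T1")
        case True then show ?thesis using T1 by (intro exI[of _ T1]) auto
      next
        case False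
        define T2 where "T2 = insert {Inr x, Inl g2} T1"
        have L2: "T2 \<subseteq> join_E VG EG VH EH \<and> is_tree T2 \<and> inj_on c T2 \<and> \<Union>T2 = insert (Inl g2) (\<Union>T1)"
          unfolding T2_def
        proof (rule add_leaf[OF T1(1-3) T1(5)])
          show "Inl g2 \<notin> \<Union>T1" using T1(4) by auto
          show "{Inr x, Inl g2} \<in> join_E VG EG VH EH" using h VG by simp
          have "c {Inr x, Inl g2} \<ge> r" using cross[of x g2] by simp
          then show "c {Inr x, Inl g2} \<notin> c ` T1" using T1(7) by fastforce
        qed
        have "c {Inr x, Inl g2} = r + 1" using cross[of x g2] g12 by simp
        then have c2: "\<forall>e\<in>T2. c e < r + 2" using T1(7) unfolding T2_def by auto
        define T3 where "T3 = insert {Inl g2, Inl g1} T2"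
        have L3: "T3 \<subseteq> join_E VG EG VH EH \<and> is_tree T3 \<and> inj_on c T3 \<and> \<Union>T3 = insert (Inl g1) (\<Union>T2)"
          unfolding T3_def
        proof (rule add_leaf)
          show "T2 \<subseteq> join_E VG EG VH EH" "is_tree T2" "inj_on c T2" using L2 by auto
          show "Inl g2 \<in> \<Union>T2" using L2 by auto
          show "Inl g1 \<notin> \<Union>T2" using L2 T1(4) g12 by auto
          have "Inl ` {g1, g2} \<in> join_E VG EG VH EH" by (rule jE_G[OF e12])
          then show "{Inl g2, Inl g1} \<in> join_E VG EG VH EH" by (simp add: insert_commute)
          show "c {Inl g2, Inl g1} \<notin> c ` T2" using c2 cgg by fastforce
        qed
        have c3: "\<forall>e\<in>T3. e = {Inl g2, Inl g1} \<or> e = {Inr x, Inl g2} \<or> c e < r"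
          using T1(7) unfolding T3_def T2_def by auto
        define T4 where "T4 = insert {Inl g1, Inr z} T3"
        have L4: "T4 \<subseteq> join_E VG EG VH EH \<and> is_tree T4 \<and> inj_on c T4 \<and> \<Union>T4 = insert (Inr z) (\<Union>T3)"
          unfolding T4_def
        proof (rule add_leaf)
          show "T3 \<subseteq> join_E VG EG VH EH" "is_tree T3" "inj_on c T3" using L3 by auto
          show "Inl g1 \<in> \<Union>T3" using L3 by auto
          show "Inr z \<notin> \<Union>T3" using L3 L2 False by auto
          show "{Inl g1, Inr z} \<in> join_E VG EG VH EH" using h VG by simp
          have "c {Inl g1, Inr z} = r" using cross[of z g1] by (simp add: insert_commute)
          moreover have "c {Inl g2, Inl g1} = r + 2" "c {Inr x, Inl g2} = r + 1" using cgg cross g12 by auto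
          ultimately show "c {Inl g1, Inr z} \<notin> c ` T3"
          proof (intro notI)
            assume a: "c {Inl g1, Inr z} = r" "c {Inl g2, Inl g1} = r + 2" "c {Inr x, Inl g2} = r + 1"
              "c {Inl g1, Inr z} \<in> c ` T3"
            then obtain e where e: "e \<in> T3" "c e = r" by auto
            from c3 e(1) have "e = {Inl g2, Inl g1} \<or> e = {Inr x, Inl g2} \<or> c e < r" by blast
            then show False using a e(2) by auto
          qed
        qed
        show ?thesis using L4 L3 L2 T1 by (intro exI[of _ T4]) auto
      qed
    qed
  qed
  then show ?thesis unfolding r_def by (rule rx3_le)
qed



lemma three_elems:
  assumes "finite V" "card V \<ge> 3"
  shows "\<exists>x y z. x \<in> V \<and> y \<in> V \<and> z \<in> V \<and> x \<noteq> y \<and> y \<noteq> z \<and> x \<noteq> z"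
proof -
  obtain S where "S \<subseteq> V" "card S = 3" using obtain_subset_with_card_n[OF assms(2)] by blast
  then show ?thesis by (auto simp: card_3_iff)
qed

lemma join_card2:
  assumes "\<forall>e\<in>EG. card e = 2" "\<forall>e\<in>EH. card e = 2"
  shows "\<forall>e\<in>join_E VG EG VH EH. card e = 2"
proof
  fix e assume "e \<in> join_E VG EG VH EH"
  then consider (H) a where "a \<in> EH" "e = Inr ` a" | (G) a where "a \<in> EG" "e = Inl ` a"
      | (X) u v where "e = {Inl u, Inr v}"
      unfolding join_E_def by blast
  then show "card e = 2"
  proof cases
    case H then show ?thesis using assms by (simp add: card_image)
  next
    case G then show ?thesis using assms by (simp add: card_image)
  next
    case X then show ?thesis by simp
  qed
qed

lemma K_card2: "\<forall>e\<in>Kbip_E s t. card e = 2"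
proof
  fix e assume "e \<in> Kbip_E s t"
  then obtain i j where "e = {Inl i, Inr j}" unfolding Kbip_E_def by blast
  then show "card e = 2" by simp
qed

lemma K_ge3:
  assumes "2 \<le> s" "3 \<le> t"
  shows "3 \<le> rx3 (Kbip_V s t) (Kbip_E s t)"
proof -
  have "connected_graph (Kbip_V s t) (Kbip_E s t)" by (rule K_connected) (use assms in auto)
  from exists_good[OF this] obtain k c where g: "good c (Kbip_V s t) (Kbip_E s t) k" by (elim exE)
  have n: "{Inl 0, Inl 1} \<notin> Kbip_E s t"
  proof
    assume "{Inl 0, Inl 1} \<in> Kbip_E s t"
    then obtain i j where e: "{Inl 0, Inl 1} = {Inl i, (Inr j :: nat + nat)}" unfolding Kbip_E_def by blast
    have "Inr j \<in> {Inl i, (Inr j :: nat + nat)}" by simp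
    then have "Inr j \<in> {Inl 0, (Inl 1 :: nat + nat)}" unfolding e .
    then show False by simp
  qed
  show ?thesis
    by (rule rx3_ge3[OF g K_card2, of "Inl 0" "Inl 1" "Inr 0" "Inr 1" "Inr 2"])
       (use assms n in \<open>auto simp: Kbip_V_def\<close>)
qed

lemma join_le_K:
  assumes "2 \<le> s" "3 \<le> t" "finite VG" "finite VH" "card VG = s" "card VH = t"
  shows "rx3 (join_V VG VH) (join_E VG EG VH EH) \<le> rx3 (Kbip_V s t) (Kbip_E s t)"
proof -
  have "connected_graph (Kbip_V s t) (Kbip_E s t)" by (rule K_connected) (use assms in auto)
  from exists_good[OF this] obtain k c where "good c (Kbip_V s t) (Kbip_E s t) k" by (elim exE)
  then obtain c where g: "good c (Kbip_V s t) (Kbip_E s t) (rx3 (Kbip_V s t) (Kbip_E s t))"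
    using rx3_good by blast
  have "0 < rx3 (Kbip_V s t) (Kbip_E s t)" using K_ge3[OF assms(1,2)] by simp
  from K_to_join[where EG=EG and EH=EH, OF g this assms(3-6)]
  obtain c' where "good c' (join_V VG VH) (join_E VG EG VH EH) (rx3 (Kbip_V s t) (Kbip_E s t))"
    by (elim exE)
  then show ?thesis by (rule rx3_le)
qed

lemma Inl_pair_notin:
  assumes "{u, v} \<notin> EG" "u \<noteq> v"
  shows "{Inl u, Inl v} \<notin> join_E VG EG VH EH"
proof -
  have 1: "{Inl u, Inl v} \<notin> image Inr ` EH"
  proof
    assume "{Inl u, Inl v} \<in> image Inr ` EH"
    then obtain a where "{Inl u, Inl v} = Inr ` a" by blast
    then have "Inl u \<in> Inr ` a" by (metis insertI1)
    then show False by blast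
  qed
  have 2: "{Inl u, Inl v} \<notin> image Inl ` EG"
  proof
    assume "{Inl u, Inl v} \<in> image Inl ` EG"
    then obtain a where a: "a \<in> EG" "{Inl u, Inl v} = Inl ` a" by blast
    have "{u, v} = a" using arg_cong[OF a(2), of "vimage Inl"] by auto
    then show False using a assms by simp
  qed
  have 3: "{Inl u, Inl v} \<notin> {{Inl u', Inr v'} | u' v'. u' \<in> VG \<and> v' \<in> VH}"
  proof
    assume "{Inl u, Inl v} \<in> {{Inl u', Inr v'} | u' v'. u' \<in> VG \<and> v' \<in> VH}"
    then obtain u' v' where e: "{Inl u, Inl v} = {Inl u', Inr v'}" by blast
    have "Inr v' \<in> {Inl u', Inr v'}" by simp
    then have "Inr v' \<in> {Inl u, Inl v}" unfolding e .
    then show False by simp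
  qed
  show ?thesis using 1 2 3 unfolding join_E_def by blast
qed

lemma Inr_pair_notin:
  assumes "{u, v} \<notin> EH" "u \<noteq> v"
  shows "{Inr u, Inr v} \<notin> join_E VG EG VH EH"
proof -
  have 1: "{Inr u, Inr v} \<notin> image Inl ` EG"
  proof
    assume "{Inr u, Inr v} \<in> image Inl ` EG"
    then obtain a where "{Inr u, Inr v} = Inl ` a" by blast
    then have "Inr u \<in> Inl ` a" by (metis insertI1)
    then show False by blast
  qed
  have 2: "{Inr u, Inr v} \<notin> image Inr ` EH"
  proof
    assume "{Inr u, Inr v} \<in> image Inr ` EH"
    then obtain a where a: "a \<in> EH" "{Inr u, Inr v} = Inr ` a" by blast
    have "{u, v} = a" using arg_cong[OF a(2), of "vimage Inr"] by auto
    then show False using a assms by simp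
  qed
  have 3: "{Inr u, Inr v} \<notin> {{Inl u', Inr v'} | u' v'. u' \<in> VG \<and> v' \<in> VH}"
  proof
    assume "{Inr u, Inr v} \<in> {{Inl u', Inr v'} | u' v'. u' \<in> VG \<and> v' \<in> VH}"
    then obtain u' v' where e: "{Inr u, Inr v} = {Inl u', Inr v'}" by blast
    have "Inl u' \<in> {Inl u', Inr v'}" by simp
    then have "Inl u' \<in> {Inr u, Inr v}" unfolding e .
    then show False by simp
  qed
  show ?thesis using 1 2 3 unfolding join_E_def by blast
qed



theorem theorem8:
  fixes VG :: "'a set" and EG :: "'a set set" and VH :: "'b set" and EH :: "'b set set"
    and s t :: nat
  assumes "connected_graph VG EG" and "connected_graph VH EH"
    and "\<not> (complete_graph VG EG \<and> complete_graph VH EH)"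
    and "card VG = s" and "card VH = t" and "s \<le> t" and "t \<ge> 3"
  shows "(s = 1 \<longrightarrow> rx3 (join_V VG VH) (join_E VG EG VH EH) \<le> rx3 VH EH + 1)
    \<and> (s = 2 \<longrightarrow> rx3 (join_V VG VH) (join_E VG EG VH EH)
          \<le> min (rc VH EH + 3) (rx3 (Kbip_V 2 t) (Kbip_E 2 t)))
    \<and> (3 \<le> s \<longrightarrow> rx3 (join_V VG VH) (join_E VG EG VH EH)
          \<le> min (max (rx3 VG EG) (rx3 VH EH) + 1) (rx3 (Kbip_V s t) (Kbip_E s t)))
    \<and> (s = t \<longrightarrow> rx3 (join_V VG VH) (join_E VG EG VH EH) = rx3 (Kbip_V s t) (Kbip_E s t)
          \<and> rx3 (Kbip_V s t) (Kbip_E s t) = 3)"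
proof -
  note cG = assms(1) and cH = assms(2) and nc = assms(3) and cs = assms(4) and ct = assms(5)
    and st = assms(6) and t3 = assms(7)
  have finG: "finite VG" and eG: "\<forall>e\<in>EG. e \<subseteq> VG \<and> card e = 2" using conn_props[OF cG] by auto
  have finH: "finite VH" and eH: "\<forall>e\<in>EH. e \<subseteq> VH \<and> card e = 2" using conn_props[OF cH] by auto
  have P1: "s = 1 \<longrightarrow> rx3 (join_V VG VH) (join_E VG EG VH EH) \<le> rx3 VH EH + 1"
    using part1[OF cG cH] cs ct t3 by auto
  have P2: "s = 2 \<longrightarrow> rx3 (join_V VG VH) (join_E VG EG VH EH)
          \<le> min (rc VH EH + 3) (rx3 (Kbip_V 2 t) (Kbip_E 2 t))"
  proof
    assume s2: "s = 2"
    have "rx3 (join_V VG VH) (join_E VG EG VH EH) \<le> rc VH EH + 3" using part2[OF cG cH] cs s2 by auto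
    moreover have "rx3 (join_V VG VH) (join_E VG EG VH EH) \<le> rx3 (Kbip_V 2 t) (Kbip_E 2 t)"
      using join_le_K[of 2 t VG VH EG EH] t3 finG finH cs ct s2 by auto
    ultimately show "rx3 (join_V VG VH) (join_E VG EG VH EH) \<le> min (rc VH EH + 3) (rx3 (Kbip_V 2 t) (Kbip_E 2 t))"
      by simp
  qed
  have P3: "3 \<le> s \<longrightarrow> rx3 (join_V VG VH) (join_E VG EG VH EH)
          \<le> min (max (rx3 VG EG) (rx3 VH EH) + 1) (rx3 (Kbip_V s t) (Kbip_E s t))"
  proof
    assume s3: "3 \<le> s"
    have "rx3 (join_V VG VH) (join_E VG EG VH EH) \<le> max (rx3 VG EG) (rx3 VH EH) + 1"
      using part3[OF cG cH] cs ct s3 t3 by auto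
    moreover have "rx3 (join_V VG VH) (join_E VG EG VH EH) \<le> rx3 (Kbip_V s t) (Kbip_E s t)"
      using join_le_K[of s t VG VH EG EH] t3 finG finH cs ct s3 by auto
    ultimately show "rx3 (join_V VG VH) (join_E VG EG VH EH) \<le> min (max (rx3 VG EG) (rx3 VH EH) + 1) (rx3 (Kbip_V s t) (Kbip_E s t))"
      by simp
  qed
  have P4: "s = t \<longrightarrow> rx3 (join_V VG VH) (join_E VG EG VH EH) = rx3 (Kbip_V s t) (Kbip_E s t)
          \<and> rx3 (Kbip_V s t) (Kbip_E s t) = 3"
  proof
    assume eq: "s = t"
    have Kg: "good col (Kbip_V s t) (Kbip_E s t) 3" using K_good[of s] eq by simp
    have K3: "rx3 (Kbip_V s t) (Kbip_E s t) = 3"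
      using rx3_le[OF Kg] K_ge3[of s t] eq t3 by simp
    from K_to_join[where EG=EG and EH=EH, OF Kg _ finG finH cs ct]
    obtain c where gj: "good c (join_V VG VH) (join_E VG EG VH EH) 3" by auto
    have c2: "\<forall>e\<in>join_E VG EG VH EH. card e = 2" using join_card2 eG eH by blast
    have "3 \<le> rx3 (join_V VG VH) (join_E VG EG VH EH)"
    proof (cases "complete_graph VG EG")
      case False
      then obtain u v where uv: "u \<in> VG" "v \<in> VG" "u \<noteq> v" "{u, v} \<notin> EG"
        unfolding complete_graph_def by blast
      obtain x y z where xyz: "x \<in> VH" "y \<in> VH" "z \<in> VH" "x \<noteq> y" "y \<noteq> z" "x \<noteq> z"
        using three_elems[OF finH] ct t3 by blast
      have n: "{Inl u, Inl v} \<notin> join_E VG EG VH EH" by (rule Inl_pair_notin[OF uv(4,3)])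
      show ?thesis
        by (rule rx3_ge3[OF gj c2, of "Inl u" "Inl v" "Inr x" "Inr y" "Inr z"])
           (use uv xyz n in \<open>auto simp: join_V_def\<close>)
    next
      case True
      then have "\<not> complete_graph VH EH" using nc by blast
      then obtain u v where uv: "u \<in> VH" "v \<in> VH" "u \<noteq> v" "{u, v} \<notin> EH"
        unfolding complete_graph_def by blast
      obtain x y z where xyz: "x \<in> VG" "y \<in> VG" "z \<in> VG" "x \<noteq> y" "y \<noteq> z" "x \<noteq> z"
        using three_elems[OF finG] cs eq t3 by blast
      have n: "{Inr u, Inr v} \<notin> join_E VG EG VH EH" by (rule Inr_pair_notin[OF uv(4,3)])
      show ?thesis
        by (rule rx3_ge3[OF gj c2, of "Inr u" "Inr v" "Inl x" "Inl y" "Inl z"])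
           (use uv xyz n in \<open>auto simp: join_V_def\<close>)
    qed
    moreover have "rx3 (join_V VG VH) (join_E VG EG VH EH) \<le> 3" by (rule rx3_le[OF gj])
    ultimately show "rx3 (join_V VG VH) (join_E VG EG VH EH) = rx3 (Kbip_V s t) (Kbip_E s t)
          \<and> rx3 (Kbip_V s t) (Kbip_E s t) = 3" using K3 by simp
  qed
  show ?thesis using P1 P2 P3 P4 by blast
qed

end
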